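(* In the model described in the context, with $\overline{Y}_n=\frac1n\sum_{r=1}^nY^{(n)}_r$, $$\mathbb{E}[\overline{Y}_n\mid\mathcal{Y}_n]=\delta e^{-\alpha U^{(n)}},$$ $$\mathbb{E}[\overline{Y}_n^2\mid\mathcal{Y}_n]=n^{-1}-(1-\delta^2)e^{-2\alpha U^{(n)}}+(1-n^{-1})\mathbb{E}[e^{-2\alpha\tau^{(n)}}\mid\mathcal{Y}_n]+n^{-1}\Big(\tfrac{\sigma_a^2}{2\alpha}\Big)^{-1}\mathbb{E}\Big[\sum_{k=1}^{\Upsilon^{(n)}}\sigma^2_{c,\mathrm{I}^{(n)}_k}J_ke^{-2\alpha(T_{\mathrm{I}^{(n)}_k+1}+\dots+T_n)}\,\Big|\,\mathcal{Y}_n\Big]+(1-n^{-1})\Big(\tfrac{\sigma_a^2}{2\alpha}\Big)^{-1}\mathbb{E}\Big[\sum_{k=1}^{\upsilon^{(n)}}\sigma^2_{c,\tilde{\mathrm{I}}^{(n)}_k}\tilde{J}_ke^{-2\alpha(T_{\tilde{\mathrm{I}}^{(n)}_k+1}+\dots+T_n)}\,\Big|\,\mathcal{Y}_n\Big],$$ and $$\mathrm{Var}(\overline{Y}_n\mid\mathcal{Y}_n)=n^{-1}-e^{-2\alpha U^{(n)}}+(1-n^{-1})\mathbb{E}[e^{-2\alpha\tau^{(n)}}\mid\mathcal{Y}_n]+n^{-1}\Big(\tfrac{\sigma_a^2}{2\alpha}\Big)^{-1}\mathbb{E}\Big[\sum_{k=1}^{\Upsilon^{(n)}}\sigma^2_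{c,\mathrm{I}^{(n)}_k}J_ke^{-2\alpha(T_{\mathrm{I}^{(n)}_k+1}+\dots+T_n)}\,\Big|\,\mathcal{Y}_n\Big]+(1-n^{-1})\Big(\tfrac{\sigma_a^2}{2\alpha}\Big)^{-1}\mathbb{E}\Big[\sum_{k=1}^{\upsilon^{(n)}}\sigma^2_{c,\tilde{\mathrm{I}}^{(n)}_k}\tilde{J}_ke^{-2\alpha(T_{\tilde{\mathrm{I}}^{(n)}_k+1}+\dots+T_n)}\,\Big|\,\mathcal{Y}_n\Big].$$
   Context: Tree: a Yule tree with birth rate $1$ conditioned on $n$ tips. $T_1,\dots,T_n$ are independent with $T_k\sim\mathrm{Exp}(k)$; starting from one lineage at the origin (time $0$), the $k$-th speciation event (internal node $k$, $k=1,\dots,n-1$, node $1$ the root) occurs at time $T_1+\dots+T_k$ and consists of a uniformly chosen one of the $k$ living lineages splitting in two; the tree is observed at time $U^{(n)}=T_1+\dots+T_n$ with $n$ tips. Trait: along every branch $dX(t)=-\alpha(X(t)-\theta)dt+\sigma_adB_t$ with $\alpha>0$, $\sigma_a>0$, $\theta\in\mathbb{R}$, $X(0)=X_0$; at the $k$-th speciation event, independently on each daughter lineage, with probability $p_k$ the value receives an additive jump $\mathcal{N}(0,\sigma_{c,k}^2)$, independent of everything else; daughters then evolve independently. $\mathcal{Y}_n$ is the $\sigma$-algebra generated by the tree (topology and $T_k$) and the jump pattern. $Y^{(n)}_r=(X^{(n)}_r-\theta)/\sqrt{\sigma_a^2/(2\alpha)}$ for tip values $X^{(n)}_r$, and $\delta=(X_0-\theta)/\sqrt{\sigma_a^2/(2\alpha)}$.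 Random lineage (tip chosen uniformly, independently given $\mathcal{Y}_n$): $\Upsilon^{(n)}$ is the number of internal nodes from the root (inclusive) to the tip, with indices $\mathrm{I}^{(n)}_1<\dots<\mathrm{I}^{(n)}_{\Upsilon^{(n)}}$, and $J_k=1$ iff a jump occurred on this lineage just after event $\mathrm{I}^{(n)}_k$. Random pair (unordered pair of distinct tips chosen uniformly): with $m$ the index of their most recent common ancestor, $\tau^{(n)}=T_{m+1}+\dots+T_n$; $\upsilon^{(n)}$ is the number of internal nodes from the root (inclusive) to node $m$, excluding $m$, with indices $\tilde{\mathrm{I}}^{(n)}_1<\dots<\tilde{\mathrm{I}}^{(n)}_{\upsilon^{(n)}}$; $\tilde{J}_k=1$ iff a jump occurred just after event $\tilde{\mathrm{I}}^{(n)}_k$ on the daughter lineage on the common path of the pair. *)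

theory Defs
  imports "HOL-Probability.Probability"
begin

(* Encoding of a Yule tree with n tips (fixed realization, i.e. we work conditionally on Y_n).
   Lineages are labelled by naturals.  Just after event k (k = 0..n-1; "event 0" = origin)
   the living lineages are 0..k.  At event k (1 <= k <= n-1) lineage c k (< k) splits into
   the two daughter lineages labelled c k and k.  T k (k = 1..n) is the waiting time before
   event k (event n = observation time).  jmp k l says whether a jump occurred on daughter
   lineage l (l in {c k, k}) just after event k. *)

datatype innov = OUi nat nat | JUi nat nat
  (* OUi k l: standard normal innovation of the OU transition of lineage l over the
     interval of length T k ending at event k;  JUi k l: standard normal generating
     the jump size on daughter lineage l just after event k *)

definition innov_set :: "nat \<Rightarrow> (nat \<Rightarrow> nat) \<Rightarrow> innov set" where
  "innov_set n c =
     {OUi k l | k l. 1 \<le> k \<and> k \<le> n \<and> l < k} \<union>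
     {JUi k l | k l. 1 \<le> k \<and> k < n \<and> (l = c k \<or> l = k)}"

(* exact OU transition over a time interval of length t, driven by a standard normal w *)
definition ou_step :: "real \<Rightarrow> real \<Rightarrow> real \<Rightarrow> real \<Rightarrow> real \<Rightarrow> real \<Rightarrow> real" where
  "ou_step \<alpha> \<theta> \<sigma>a t x w =
     \<theta> + (x - \<theta>) * exp (- \<alpha> * t) + sqrt (\<sigma>a\<^sup>2 / (2 * \<alpha>) * (1 - exp (- 2 * \<alpha> * t))) * w"

(* trait value of lineage l just after event k *)
fun lval :: "real \<Rightarrow> real \<Rightarrow> real \<Rightarrow> real \<Rightarrow> (nat \<Rightarrow> real) \<Rightarrow> (nat \<Rightarrow> nat) \<Rightarrow> (nat \<Rightarrow> real)
             \<Rightarrow> (nat \<Rightarrow> nat \<Rightarrow> bool) \<Rightarrow> (innov \<Rightarrow> real) \<Rightarrow> nat \<Rightarrow> nat \<Rightarrow> real" where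
  "lval \<alpha> \<theta> \<sigma>a X0 T c sc jmp z 0 l = X0"
| "lval \<alpha> \<theta> \<sigma>a X0 T c sc jmp z (Suc k) l =
     (let pl = (if l = Suc k then c (Suc k) else l)
      in ou_step \<alpha> \<theta> \<sigma>a (T (Suc k)) (lval \<alpha> \<theta> \<sigma>a X0 T c sc jmp z k pl) (z (OUi (Suc k) pl))
         + (if (l = c (Suc k) \<or> l = Suc k) \<and> jmp (Suc k) l
            then sc (Suc k) * z (JUi (Suc k) l) else 0))"

(* trait value at tip r (r < n), observed at time U = T 1 + ... + T n *)
definition tipval :: "real \<Rightarrow> real \<Rightarrow> real \<Rightarrow> real \<Rightarrow> (nat \<Rightarrow> real) \<Rightarrow> (nat \<Rightarrow> nat) \<Rightarrow> (nat \<Rightarrow> real)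
             \<Rightarrow> (nat \<Rightarrow> nat \<Rightarrow> bool) \<Rightarrow> nat \<Rightarrow> (innov \<Rightarrow> real) \<Rightarrow> nat \<Rightarrow> real" where
  "tipval \<alpha> \<theta> \<sigma>a X0 T c sc jmp n z r =
     ou_step \<alpha> \<theta> \<sigma>a (T n) (lval \<alpha> \<theta> \<sigma>a X0 T c sc jmp z (n - 1) r) (z (OUi n r))"

definition Ybar :: "real \<Rightarrow> real \<Rightarrow> real \<Rightarrow> real \<Rightarrow> (nat \<Rightarrow> real) \<Rightarrow> (nat \<Rightarrow> nat) \<Rightarrow> (nat \<Rightarrow> real)
             \<Rightarrow> (nat \<Rightarrow> nat \<Rightarrow> bool) \<Rightarrow> nat \<Rightarrow> (innov \<Rightarrow> real) \<Rightarrow> real" where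
  "Ybar \<alpha> \<theta> \<sigma>a X0 T c sc jmp n z =
     (1 / real n) * (\<Sum>r<n. (tipval \<alpha> \<theta> \<sigma>a X0 T c sc jmp n z r - \<theta>) / sqrt (\<sigma>a\<^sup>2 / (2 * \<alpha>)))"

(* label, just after event k, of the ancestor of the lineage labelled r at the end *)
definition anc :: "nat \<Rightarrow> (nat \<Rightarrow> nat) \<Rightarrow> nat \<Rightarrow> nat \<Rightarrow> nat" where
  "anc n c k r = foldr (\<lambda>j l. if l = j then c j else l) [Suc k..<n] r"

definition Utime :: "nat \<Rightarrow> (nat \<Rightarrow> real) \<Rightarrow> real" where
  "Utime n T = (\<Sum>k=1..n. T k)"

definition tail :: "nat \<Rightarrow> (nat \<Rightarrow> real) \<Rightarrow> nat \<Rightarrow> real" where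
  "tail n T k = (\<Sum>j\<in>{Suc k..n}. T j)"

(* random lineage to tip r: indices I_1 < ... < I_Upsilon of internal nodes on the path *)
definition lin_nodes :: "nat \<Rightarrow> (nat \<Rightarrow> nat) \<Rightarrow> nat \<Rightarrow> nat list" where
  "lin_nodes n c r = sorted_list_of_set {k \<in> {1..<n}. anc n c (k - 1) r = c k}"

definition lin_sum :: "real \<Rightarrow> (nat \<Rightarrow> real) \<Rightarrow> (nat \<Rightarrow> nat) \<Rightarrow> (nat \<Rightarrow> real) \<Rightarrow> (nat \<Rightarrow> nat \<Rightarrow> bool)
                        \<Rightarrow> nat \<Rightarrow> nat \<Rightarrow> real" where
  "lin_sum \<alpha> T c sc jmp n r =
     (let I = lin_nodes n c r
      in \<Sum>i=1..length I.
           (sc (I ! (i - 1)))\<^sup>2 * (if jmp (I ! (i - 1)) (anc n c (I ! (i - 1)) r) then 1 else 0)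
           * exp (- 2 * \<alpha> * tail n T (I ! (i - 1))))"

definition mrca :: "nat \<Rightarrow> (nat \<Rightarrow> nat) \<Rightarrow> nat \<Rightarrow> nat \<Rightarrow> nat" where
  "mrca n c r s = Max {k \<in> {1..<n}. anc n c (k - 1) r = anc n c (k - 1) s}"

definition pair_nodes :: "nat \<Rightarrow> (nat \<Rightarrow> nat) \<Rightarrow> nat \<Rightarrow> nat \<Rightarrow> nat list" where
  "pair_nodes n c r s =
     sorted_list_of_set {k \<in> {1..<n}. k < mrca n c r s \<and> anc n c (k - 1) r = c k}"

definition pair_sum :: "real \<Rightarrow> (nat \<Rightarrow> real) \<Rightarrow> (nat \<Rightarrow> nat) \<Rightarrow> (nat \<Rightarrow> real) \<Rightarrow> (nat \<Rightarrow> nat \<Rightarrow> bool)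
                        \<Rightarrow> nat \<Rightarrow> nat \<Rightarrow> nat \<Rightarrow> real" where
  "pair_sum \<alpha> T c sc jmp n r s =
     (let I = pair_nodes n c r s
      in \<Sum>i=1..length I.
           (sc (I ! (i - 1)))\<^sup>2 * (if jmp (I ! (i - 1)) (anc n c (I ! (i - 1)) r) then 1 else 0)
           * exp (- 2 * \<alpha> * tail n T (I ! (i - 1))))"

(* conditional expectations given Y_n over the uniformly random tip / unordered pair {r,s}, r<s *)
definition avg_tip :: "nat \<Rightarrow> (nat \<Rightarrow> real) \<Rightarrow> real" where
  "avg_tip n f = (\<Sum>r<n. f r) / real n"

definition avg_pair :: "nat \<Rightarrow> (nat \<Rightarrow> nat \<Rightarrow> real) \<Rightarrow> real" where
  "avg_pair n f = (\<Sum>r<n. \<Sum>s\<in>{r<..<n}. f r s) / real (n choose 2)"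

end

theory Submission
  imports Defs
begin

lemma anc_top: "anc (Suc k) c k l = l"
  by (simp add: anc_def)

lemma anc_step: "k < m \<Longrightarrow> anc (Suc m) c k l = anc m c k (if l = m then c m else l)"
  by (simp add: anc_def)

lemma anc_pred: "Suc j < n \<Longrightarrow> anc n c j r = (if anc n c (Suc j) r = Suc j then c (Suc j) else anc n c (Suc j) r)"
  by (simp add: anc_def upt_conv_Cons)

lemma anc_bound:
  assumes c: "\<forall>j\<in>{1..m}. c j < j" and k: "k \<le> m" and l: "l < Suc m"
  shows "anc (Suc m) c k l < Suc k"
  using c k l
proof (induction m arbitrary: l)
  case 0 then show ?case by (simp add: anc_def)
next
  case (Suc m)
  show ?case
  proof (cases "k = Suc m")
    case True then show ?thesis using Suc.prems by (simp add: anc_top)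
  next
    case False
    then have km: "k \<le> m" "k < Suc m" using Suc.prems by auto
    have "(if l = Suc m then c (Suc m) else l) < Suc m" using Suc.prems by auto
    then show ?thesis using Suc.IH[of "if l = Suc m then c (Suc m) else l"] Suc.prems km
      by (simp add: anc_step)
  qed
qed

lemma tail_Suc: "j \<le> k \<Longrightarrow> tail (Suc k) T j = tail k T j + T (Suc k)"
  by (simp add: tail_def)

lemma tail_self: "tail k T k = 0"
  by (simp add: tail_def)

definition sqv :: "real \<Rightarrow> real \<Rightarrow> (nat \<Rightarrow> real) \<Rightarrow> nat \<Rightarrow> real" where
  "sqv \<alpha> \<sigma>a T j = sqrt (\<sigma>a\<^sup>2 / (2 * \<alpha>) * (1 - exp (- 2 * \<alpha> * T j)))"

lemma lval_exp:
  "lval \<alpha> \<theta> \<sigma>a X0 T c sc jmp z k l = \<theta> + (X0 - \<theta>) * exp (- \<alpha> * tail k T 0)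
     + (\<Sum>j\<in>{1..k}. exp (- \<alpha> * tail k T j) * (sqv \<alpha> \<sigma>a T j * z (OUi j (anc (Suc k) c (j-1) l))
        + (if (anc (Suc k) c j l = c j \<or> anc (Suc k) c j l = j) \<and> jmp j (anc (Suc k) c j l)
           then sc j * z (JUi j (anc (Suc k) c j l)) else 0)))"
proof (induction k arbitrary: l)
  case 0 then show ?case by (simp add: tail_def)
next
  case (Suc k)
  define pl where "pl = (if l = Suc k then c (Suc k) else l)"
  define F where "F = (\<lambda>K L j. exp (- \<alpha> * tail K T j) * (sqv \<alpha> \<sigma>a T j * z (OUi j (anc (Suc K) c (j-1) L))
        + (if (anc (Suc K) c j L = c j \<or> anc (Suc K) c j L = j) \<and> jmp j (anc (Suc K) c j L)
           then sc j * z (JUi j (anc (Suc K) c j L)) else 0)))"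
  have e1: "F (Suc k) l j = exp (- \<alpha> * T (Suc k)) * F k pl j" if "j \<in> {1..k}" for j
  proof -
    have "anc (Suc (Suc k)) c (j-1) l = anc (Suc k) c (j-1) pl" "anc (Suc (Suc k)) c j l = anc (Suc k) c j pl"
      using that by (auto simp: anc_step pl_def)
    moreover have "exp (- \<alpha> * tail (Suc k) T j) = exp (- \<alpha> * T (Suc k)) * exp (- \<alpha> * tail k T j)"
      using that by (simp add: tail_Suc exp_add[symmetric] algebra_simps)
    ultimately show ?thesis unfolding F_def by (simp add: algebra_simps)
  qed
  have e2: "F (Suc k) l (Suc k) = sqv \<alpha> \<sigma>a T (Suc k) * z (OUi (Suc k) pl)
       + (if (l = c (Suc k) \<or> l = Suc k) \<and> jmp (Suc k) l then sc (Suc k) * z (JUi (Suc k) l) else 0)"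
    unfolding F_def by (simp add: tail_self anc_top anc_step pl_def)
  have t0: "exp (- \<alpha> * tail (Suc k) T 0) = exp (- \<alpha> * T (Suc k)) * exp (- \<alpha> * tail k T 0)"
    by (simp add: tail_Suc exp_add[symmetric] algebra_simps)
  have "sum (F (Suc k) l) {1..Suc k} = sum (F (Suc k) l) {1..k} + F (Suc k) l (Suc k)"
    by (simp add: sum.cl_ivl_Suc)
  also have "sum (F (Suc k) l) {1..k} = exp (- \<alpha> * T (Suc k)) * sum (F k pl) {1..k}"
    by (simp add: e1 sum_distrib_left)
  finally have S: "sum (F (Suc k) l) {1..Suc k} = exp (- \<alpha> * T (Suc k)) * sum (F k pl) {1..k} + F (Suc k) l (Suc k)" .
  have IH: "lval \<alpha> \<theta> \<sigma>a X0 T c sc jmp z k pl = \<theta> + (X0 - \<theta>) * exp (- \<alpha> * tail k T 0) + sum (F k pl) {1..k}"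
    using Suc.IH[of pl] unfolding F_def by simp
  have "lval \<alpha> \<theta> \<sigma>a X0 T c sc jmp z (Suc k) l = \<theta> + (lval \<alpha> \<theta> \<sigma>a X0 T c sc jmp z k pl - \<theta>) * exp (- \<alpha> * T (Suc k))
     + sqv \<alpha> \<sigma>a T (Suc k) * z (OUi (Suc k) pl)
     + (if (l = c (Suc k) \<or> l = Suc k) \<and> jmp (Suc k) l then sc (Suc k) * z (JUi (Suc k) l) else 0)"
    by (simp add: pl_def[symmetric] Let_def ou_step_def sqv_def)
  also have "\<dots> = \<theta> + (X0 - \<theta>) * exp (- \<alpha> * tail (Suc k) T 0) + sum (F (Suc k) l) {1..Suc k}"
    unfolding IH S e2 t0 by (simp add: algebra_simps)
  finally show ?case unfolding F_def .
qed

lemma tip_exp: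
  assumes n: "n \<ge> 1"
  shows "tipval \<alpha> \<theta> \<sigma>a X0 T c sc jmp n z r = \<theta> + (X0 - \<theta>) * exp (- \<alpha> * Utime n T)
     + (\<Sum>j\<in>{1..n}. exp (- \<alpha> * tail n T j) * sqv \<alpha> \<sigma>a T j * z (OUi j (anc n c (j-1) r)))
     + (\<Sum>j\<in>{j\<in>{1..<n}. (anc n c j r = c j \<or> anc n c j r = j) \<and> jmp j (anc n c j r)}.
          exp (- \<alpha> * tail n T j) * sc j * z (JUi j (anc n c j r)))"
proof -
  obtain m where m: "n = Suc m" using n by (cases n) auto
  let ?P = "\<lambda>j. (anc n c j r = c j \<or> anc n c j r = j) \<and> jmp j (anc n c j r)"
  have tl: "tail n T j = tail m T j + T n" if "j \<le> m" for j using that m by (simp add: tail_Suc)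
  have U: "Utime n T = tail m T 0 + T n" using tl[of 0] by (simp add: Utime_def tail_def)
  have L: "lval \<alpha> \<theta> \<sigma>a X0 T c sc jmp z m r = \<theta> + (X0 - \<theta>) * exp (- \<alpha> * tail m T 0)
     + ((\<Sum>j\<in>{1..m}. exp (- \<alpha> * tail m T j) * sqv \<alpha> \<sigma>a T j * z (OUi j (anc n c (j-1) r)))
       + (\<Sum>j\<in>{j\<in>{1..m}. ?P j}. exp (- \<alpha> * tail m T j) * sc j * z (JUi j (anc n c j r))))"
  proof -
    have "(\<Sum>j\<in>{1..m}. exp (- \<alpha> * tail m T j) * (sqv \<alpha> \<sigma>a T j * z (OUi j (anc (Suc m) c (j-1) r))
        + (if ?P j then sc j * z (JUi j (anc (Suc m) c j r)) else 0)))
      = (\<Sum>j\<in>{1..m}. exp (- \<alpha> * tail m T j) * sqv \<alpha> \<sigma>a T j * z (OUi j (anc n c (j-1) r)))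
       + (\<Sum>j\<in>{1..m}. if ?P j then exp (- \<alpha> * tail m T j) * sc j * z (JUi j (anc n c j r)) else 0)"
      unfolding sum.distrib[symmetric] m by (intro sum.cong) (auto simp: algebra_simps)
    also have "(\<Sum>j\<in>{1..m}. if ?P j then exp (- \<alpha> * tail m T j) * sc j * z (JUi j (anc n c j r)) else 0)
       = (\<Sum>j\<in>{j\<in>{1..m}. ?P j}. exp (- \<alpha> * tail m T j) * sc j * z (JUi j (anc n c j r)))"
      by (rule sum.inter_filter[symmetric]) simp
    finally show ?thesis unfolding lval_exp m by simp
  qed
  have e: "exp (- \<alpha> * tail n T j) = exp (- \<alpha> * T n) * exp (- \<alpha> * tail m T j)" if "j \<le> m" for j
    using tl[OF that] by (simp add: exp_add[symmetric] algebra_simps)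
  have e': "exp (- (\<alpha> * tail n T j)) = exp (- (\<alpha> * T n)) * exp (- (\<alpha> * tail m T j))" if "j \<le> m" for j
    using e[OF that] by simp
  have S1: "(\<Sum>j\<in>{1..n}. exp (- \<alpha> * tail n T j) * sqv \<alpha> \<sigma>a T j * z (OUi j (anc n c (j-1) r)))
      = exp (- \<alpha> * T n) * (\<Sum>j\<in>{1..m}. exp (- \<alpha> * tail m T j) * sqv \<alpha> \<sigma>a T j * z (OUi j (anc n c (j-1) r)))
        + sqv \<alpha> \<sigma>a T n * z (OUi n r)"
  proof -
    have S1a: "(\<Sum>j\<in>{1..m}. exp (- \<alpha> * tail n T j) * sqv \<alpha> \<sigma>a T j * z (OUi j (anc n c (j-1) r)))
      = exp (- \<alpha> * T n) * (\<Sum>j\<in>{1..m}. exp (- \<alpha> * tail m T j) * sqv \<alpha> \<sigma>a T j * z (OUi j (anc n c (j-1) r)))"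
      unfolding sum_distrib_left by (intro sum.cong) (auto simp: e e' mult.assoc)
    have "{1..n} = insert n {1..m}" using m by auto
    then show ?thesis using S1a m by (simp add: tail_self anc_top)
  qed
  have S2: "(\<Sum>j\<in>{j\<in>{1..<n}. ?P j}. exp (- \<alpha> * tail n T j) * sc j * z (JUi j (anc n c j r)))
      = exp (- \<alpha> * T n) * (\<Sum>j\<in>{j\<in>{1..m}. ?P j}. exp (- \<alpha> * tail m T j) * sc j * z (JUi j (anc n c j r)))"
  proof -
    have "{1..<n} = {1..m}" using m by auto
    then show ?thesis unfolding sum_distrib_left
      by (intro sum.cong) (auto simp: e e' mult.assoc)
  qed
  have ex: "exp (- \<alpha> * Utime n T) = exp (- \<alpha> * T n) * exp (- \<alpha> * tail m T 0)"
    unfolding U by (simp add: exp_add[symmetric] algebra_simps)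
  have tv: "tipval \<alpha> \<theta> \<sigma>a X0 T c sc jmp n z r = \<theta> + (lval \<alpha> \<theta> \<sigma>a X0 T c sc jmp z m r - \<theta>) * exp (- \<alpha> * T n)
     + sqv \<alpha> \<sigma>a T n * z (OUi n r)"
    by (simp add: tipval_def ou_step_def sqv_def m)
  show ?thesis
    unfolding tv L S1 S2 ex by (simp add: algebra_simps)
qed

lemma normal_basic:
  fixes Z :: "'i \<Rightarrow> 'a \<Rightarrow> real"
  assumes M: "prob_space M" and S: "finite S"
   and indep: "prob_space.indep_vars M (\<lambda>_. borel) Z S"
   and normal: "\<forall>i\<in>S. distributed M lborel (Z i) std_normal_density"
   and i: "i \<in> S" and j: "j \<in> S"
  shows "integrable M (Z i)" "(\<integral>\<omega>. Z i \<omega> \<partial>M) = 0"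
    "integrable M (\<lambda>\<omega>. Z i \<omega> * Z j \<omega>)" "(\<integral>\<omega>. Z i \<omega> * Z j \<omega> \<partial>M) = (if i = j then 1 else 0)"
proof -
  interpret prob_space M by (rule M)
  have intZ: "integrable M (Z k)" and EZ: "(\<integral>\<omega>. Z k \<omega> \<partial>M) = 0"
   and int2: "integrable M (\<lambda>\<omega>. Z k \<omega> * Z k \<omega>)" and E2: "(\<integral>\<omega>. Z k \<omega> * Z k \<omega> \<partial>M) = 1"
    if k: "k \<in> S" for k
  proof -
    have D: "distributed M lborel (Z k) std_normal_density" using normal k by auto
    have nn: "\<And>x. 0 \<le> std_normal_density x" by (simp add: normal_density_nonneg)
    have "integrable lborel (\<lambda>x. std_normal_density x * x)"
      using integrable_std_normal_moment[of 1] by simp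
    then show "integrable M (Z k)"
      using distributed_integrable[OF D, of "\<lambda>x. x"] nn by simp
    have "(\<integral>x. std_normal_density x * x \<partial>lborel) = 0"
      using integral_std_normal_moment_odd[of 0] by simp
    then show "(\<integral>\<omega>. Z k \<omega> \<partial>M) = 0"
      using distributed_integral[OF D, of "\<lambda>x. x"] nn by simp
    have "integrable lborel (\<lambda>x. std_normal_density x * (x * x))"
      using integrable_std_normal_moment[of 2] by (simp add: power2_eq_square)
    then show "integrable M (\<lambda>\<omega>. Z k \<omega> * Z k \<omega>)"
      using distributed_integrable[OF D, of "\<lambda>x. x * x"] nn by simp
    have "(\<integral>x. std_normal_density x * (x * x) \<partial>lborel) = 1"
      using integral_std_normal_moment_even[of 1] by (simp add: power2_eq_square)
    then show "(\<integral>\<omega>. Z k \<omega> * Z k \<omega> \<partial>M) = 1"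
      using distributed_integral[OF D, of "\<lambda>x. x * x"] nn by simp
  qed
  show "integrable M (Z i)" "(\<integral>\<omega>. Z i \<omega> \<partial>M) = 0" using intZ EZ i by auto
  show "integrable M (\<lambda>\<omega>. Z i \<omega> * Z j \<omega>)" "(\<integral>\<omega>. Z i \<omega> * Z j \<omega> \<partial>M) = (if i = j then 1 else 0)"
  proof -
    have "integrable M (\<lambda>\<omega>. Z i \<omega> * Z j \<omega>) \<and> (\<integral>\<omega>. Z i \<omega> * Z j \<omega> \<partial>M) = (if i = j then 1 else 0)"
    proof (cases "i = j")
      case True then show ?thesis using int2 E2 i by auto
    next
      case False
      have ind: "indep_vars (\<lambda>_. borel) Z {i, j}"
        using indep_vars_subset[OF indep] i j by auto
      have p: "\<And>\<omega>. (\<Prod>k\<in>{i,j}. Z k \<omega>) = Z i \<omega> * Z j \<omega>" using False by simp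
      have "integrable M (\<lambda>\<omega>. \<Prod>k\<in>{i,j}. Z k \<omega>)" "(\<integral>\<omega>. (\<Prod>k\<in>{i,j}. Z k \<omega>) \<partial>M) = (\<Prod>k\<in>{i,j}. \<integral>\<omega>. Z k \<omega> \<partial>M)"
        using indep_vars_integrable[OF _ ind] indep_vars_lebesgue_integral[OF _ ind] intZ i j by auto
      then show ?thesis unfolding p using False EZ i j by simp
    qed
    then show "integrable M (\<lambda>\<omega>. Z i \<omega> * Z j \<omega>)" "(\<integral>\<omega>. Z i \<omega> * Z j \<omega> \<partial>M) = (if i = j then 1 else 0)" by auto
  qed
qed

lemma lin_moments:
  fixes Z :: "'i \<Rightarrow> 'a \<Rightarrow> real"
  assumes M: "prob_space M" and S: "finite S"
   and indep: "prob_space.indep_vars M (\<lambda>_. borel) Z S"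
   and normal: "\<forall>i\<in>S. distributed M lborel (Z i) std_normal_density"
   and Y: "\<And>\<omega>. Y \<omega> = \<mu> + (\<Sum>i\<in>S. B i * Z i \<omega>)"
  shows "(\<integral>\<omega>. Y \<omega> \<partial>M) = \<mu>" "(\<integral>\<omega>. (Y \<omega>)\<^sup>2 \<partial>M) = \<mu>\<^sup>2 + (\<Sum>i\<in>S. (B i)\<^sup>2)"
proof -
  interpret prob_space M by (rule M)
  note nb = normal_basic[OF M S indep normal]
  have int1: "integrable M (\<lambda>\<omega>. \<Sum>i\<in>S. B i * Z i \<omega>)"
    by (rule Bochner_Integration.integrable_sum, rule integrable_mult_right) (use nb in auto)
  have E1: "(\<integral>\<omega>. (\<Sum>i\<in>S. B i * Z i \<omega>) \<partial>M) = 0"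
    using nb by (subst Bochner_Integration.integral_sum) auto
  show "(\<integral>\<omega>. Y \<omega> \<partial>M) = \<mu>"
    unfolding Y using int1 E1 by (simp add: prob_space)
  have sq: "(Y \<omega>)\<^sup>2 = \<mu>\<^sup>2 + 2 * \<mu> * (\<Sum>i\<in>S. B i * Z i \<omega>) + (\<Sum>i\<in>S. \<Sum>j\<in>S. (B i * B j) * (Z i \<omega> * Z j \<omega>))" for \<omega>
  proof -
    have "(\<Sum>i\<in>S. B i * Z i \<omega>) * (\<Sum>i\<in>S. B i * Z i \<omega>) = (\<Sum>i\<in>S. \<Sum>j\<in>S. (B i * B j) * (Z i \<omega> * Z j \<omega>))"
      by (subst sum_product) (simp add: mult_ac)
    then show ?thesis unfolding Y power2_eq_square by (simp add: algebra_simps)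
  qed
  have int2: "integrable M (\<lambda>\<omega>. \<Sum>i\<in>S. \<Sum>j\<in>S. (B i * B j) * (Z i \<omega> * Z j \<omega>))"
  proof (rule Bochner_Integration.integrable_sum)
    fix i assume i: "i \<in> S"
    show "integrable M (\<lambda>\<omega>. \<Sum>j\<in>S. (B i * B j) * (Z i \<omega> * Z j \<omega>))"
    proof (rule Bochner_Integration.integrable_sum)
      fix j assume j: "j \<in> S"
      show "integrable M (\<lambda>\<omega>. (B i * B j) * (Z i \<omega> * Z j \<omega>))"
        using nb(3)[OF i j] by simp
    qed
  qed
  have E2: "(\<integral>\<omega>. (\<Sum>i\<in>S. \<Sum>j\<in>S. (B i * B j) * (Z i \<omega> * Z j \<omega>)) \<partial>M) = (\<Sum>i\<in>S. (B i)\<^sup>2)"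
  proof -
    have "(\<integral>\<omega>. (\<Sum>i\<in>S. \<Sum>j\<in>S. (B i * B j) * (Z i \<omega> * Z j \<omega>)) \<partial>M)
       = (\<Sum>i\<in>S. \<Sum>j\<in>S. (B i * B j) * (if i = j then 1 else 0))"
      using nb by (simp add: Bochner_Integration.integral_sum Bochner_Integration.integrable_sum)
    also have "\<dots> = (\<Sum>i\<in>S. (B i)\<^sup>2)"
      using S by (simp add: power2_eq_square if_distrib cong: if_cong)
    finally show ?thesis .
  qed
  show "(\<integral>\<omega>. (Y \<omega>)\<^sup>2 \<partial>M) = \<mu>\<^sup>2 + (\<Sum>i\<in>S. (B i)\<^sup>2)"
    unfolding sq using int1 int2 E1 E2 by (simp add: prob_space)
qed

lemma sum_delta_lin:
  assumes S: "finite S" and A: "finite A" and f: "\<forall>j\<in>A. f j \<in> S"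
  shows "(\<Sum>i\<in>S. (\<Sum>j\<in>A. if i = f j then a j else 0) * (z i :: real)) = (\<Sum>j\<in>A. a j * z (f j))"
proof -
  have "(\<Sum>i\<in>S. (\<Sum>j\<in>A. if i = f j then a j else 0) * z i) = (\<Sum>j\<in>A. \<Sum>i\<in>S. if i = f j then a j * z (f j) else 0)"
  proof -
    have "\<And>i j. (if i = f j then a j else 0) * z i = (if i = f j then a j * z (f j) else 0)" by simp
    then show ?thesis unfolding sum_distrib_right by (subst sum.swap) simp
  qed
  also have "\<dots> = (\<Sum>j\<in>A. a j * z (f j))"
    using S f by (intro sum.cong) (auto simp: sum.delta)
  finally show ?thesis .
qed

lemma sum_delta_ip:
  assumes S: "finite S" and A: "finite A" and B: "finite B" and f: "\<forall>j\<in>A. f j \<in> S" and g: "\<forall>k\<in>B. g k \<in> S"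
  shows "(\<Sum>i\<in>S. (\<Sum>j\<in>A. if i = f j then a j else 0) * (\<Sum>k\<in>B. if i = g k then b k else (0::real)))
      = (\<Sum>j\<in>A. \<Sum>k\<in>B. if f j = g k then a j * b k else 0)"
proof -
  have "(\<Sum>i\<in>S. (\<Sum>j\<in>A. if i = f j then a j else 0) * (\<Sum>k\<in>B. if i = g k then b k else (0::real)))
     = (\<Sum>i\<in>S. \<Sum>j\<in>A. \<Sum>k\<in>B. if i = f j then (if f j = g k then a j * b k else 0) else 0)"
    unfolding sum_product by (intro sum.cong refl) auto
  also have "\<dots> = (\<Sum>j\<in>A. \<Sum>k\<in>B. \<Sum>i\<in>S. if i = f j then (if f j = g k then a j * b k else 0) else 0)"
    by (subst sum.swap) (simp add: sum.swap[of _ S])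
  also have "\<dots> = (\<Sum>j\<in>A. \<Sum>k\<in>B. if f j = g k then a j * b k else 0)"
    using S f by (intro sum.cong refl) (auto simp: sum.delta)
  finally show ?thesis .
qed

lemma sum_delta_conj:
  assumes "finite A"
  shows "(\<Sum>k\<in>A. if j = k \<and> Q k then t k else (0::real)) = (if j \<in> A \<and> Q j then t j else 0)"
proof -
  have "(\<Sum>k\<in>A. if j = k \<and> Q k then t k else (0::real)) = (\<Sum>k\<in>A. if k = j then (if Q k then t k else 0) else 0)"
    by (intro sum.cong) auto
  also have "\<dots> = (if j \<in> A \<and> Q j then t j else 0)" using assms by (simp add: sum.delta)
  finally show ?thesis .
qed

lemma sum_sorted_nth:
  assumes "finite L"
  shows "(\<Sum>i=1..length (sorted_list_of_set L). g (sorted_list_of_set L ! (i - 1))) = (\<Sum>k\<in>L. (g k :: real))"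
proof -
  let ?xs = "sorted_list_of_set L"
  have "(\<Sum>i=1..length ?xs. g (?xs ! (i - 1))) = (\<Sum>i<length ?xs. g (?xs ! i))"
    using sum.atLeast1_atMost_eq[of "\<lambda>i. g (?xs ! (i - 1))" "length ?xs"] by simp
  also have "\<dots> = sum_list (map g ?xs)"
    by (simp add: sum_list_sum_nth atLeast0LessThan)
  also have "\<dots> = sum g (set ?xs)"
    by (simp add: sum.distinct_set_conv_list)
  also have "set ?xs = L" using assms by simp
  finally show ?thesis .
qed

lemma anc_mono:
  assumes "i \<le> k" "k < n" "anc n c k r = anc n c k s"
  shows "anc n c i r = anc n c i s"
  using assms
proof (induction "k - i" arbitrary: i)
  case 0 then show ?case by simp
next
  case (Suc d)
  then have "Suc i < n" "d = k - Suc i" "Suc i \<le> k" by auto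
  then have "anc n c (Suc i) r = anc n c (Suc i) s" using Suc by blast
  then show ?case using anc_pred[OF \<open>Suc i < n\<close>, of c r] anc_pred[OF \<open>Suc i < n\<close>, of c s] by simp
qed

lemma anc_bound_n:
  assumes c: "\<forall>k\<in>{1..<n}. c k < k" and k: "k < n" and r: "r < n"
  shows "anc n c k r < Suc k"
proof -
  obtain m where m: "n = Suc m" using k by (cases n) auto
  show ?thesis unfolding m using anc_bound[of m c k r] c k r m by auto
qed

lemma tail_pred: "1 \<le> j \<Longrightarrow> j \<le> n \<Longrightarrow> tail n T (j - 1) = T j + tail n T j"
proof -
  assume j: "1 \<le> j" "j \<le> n"
  have "{Suc (j - 1)..n} = insert j {Suc j..n}" using j by auto
  then show ?thesis unfolding tail_def by simp
qed

lemma telescope: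
  assumes \<alpha>: "\<alpha> > 0" and T: "\<forall>k\<in>{1..n}. T k > 0" and m: "m \<le> n"
  shows "(\<Sum>j\<in>{1..m}. (exp (- \<alpha> * tail n T j) * sqv \<alpha> \<sigma>a T j)\<^sup>2)
      = \<sigma>a\<^sup>2 / (2 * \<alpha>) * (exp (- 2 * \<alpha> * tail n T m) - exp (- 2 * \<alpha> * tail n T 0))"
  using m
proof (induction m)
  case 0 then show ?case by simp
next
  case (Suc m)
  have Tp: "T (Suc m) > 0" using T Suc.prems by auto
  have ge: "0 \<le> \<sigma>a\<^sup>2 / (2 * \<alpha>) * (1 - exp (- 2 * \<alpha> * T (Suc m)))"
    using \<alpha> Tp by (intro mult_nonneg_nonneg) auto
  have sq: "(sqv \<alpha> \<sigma>a T (Suc m))\<^sup>2 = \<sigma>a\<^sup>2 / (2 * \<alpha>) * (1 - exp (- 2 * \<alpha> * T (Suc m)))"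
    unfolding sqv_def using ge by simp
  have e2: "(exp (- \<alpha> * tail n T (Suc m)))\<^sup>2 = exp (- 2 * \<alpha> * tail n T (Suc m))"
    by (simp add: power2_eq_square exp_add[symmetric])
  have tp: "tail n T m = T (Suc m) + tail n T (Suc m)" using tail_pred[of "Suc m" n T] Suc.prems by simp
  have e3: "exp (- 2 * \<alpha> * tail n T m) = exp (- 2 * \<alpha> * T (Suc m)) * exp (- 2 * \<alpha> * tail n T (Suc m))"
    unfolding tp by (simp add: exp_add[symmetric] algebra_simps)
  have "(\<Sum>j\<in>{1..Suc m}. (exp (- \<alpha> * tail n T j) * sqv \<alpha> \<sigma>a T j)\<^sup>2)
     = (\<Sum>j\<in>{1..m}. (exp (- \<alpha> * tail n T j) * sqv \<alpha> \<sigma>a T j)\<^sup>2)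
       + (exp (- \<alpha> * tail n T (Suc m)))\<^sup>2 * (sqv \<alpha> \<sigma>a T (Suc m))\<^sup>2"
    by (simp add: sum.cl_ivl_Suc power_mult_distrib)
  also have "\<dots> = \<sigma>a\<^sup>2 / (2 * \<alpha>) * (exp (- 2 * \<alpha> * T (Suc m)) * exp (- 2 * \<alpha> * tail n T (Suc m)) - exp (- 2 * \<alpha> * tail n T 0))
       + exp (- 2 * \<alpha> * tail n T (Suc m)) * (\<sigma>a\<^sup>2 / (2 * \<alpha>) * (1 - exp (- 2 * \<alpha> * T (Suc m))))"
    unfolding Suc.IH[OF Suc_leD[OF Suc.prems]] e2 sq e3 ..
  also have "\<dots> = \<sigma>a\<^sup>2 / (2 * \<alpha>) * (exp (- 2 * \<alpha> * tail n T (Suc m)) - exp (- 2 * \<alpha> * tail n T 0))"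
    by (simp add: algebra_simps)
  finally show ?case .
qed

lemma PJ_equiv:
  assumes "k \<in> {1..<n}"
  shows "(anc n c (k - 1) r = c k) \<longleftrightarrow> (anc n c k r = c k \<or> anc n c k r = k)"
proof -
  have "Suc (k - 1) < n" "Suc (k - 1) = k" using assms by auto
  then show ?thesis using anc_pred[of "k - 1" n c r] by auto
qed

lemma mrca_props:
  assumes c: "\<forall>k\<in>{1..<n}. c k < k" and rs: "r < s" "s < n"
  shows "\<And>j. j \<in> {1..n} \<Longrightarrow> (anc n c (j - 1) r = anc n c (j - 1) s) \<longleftrightarrow> j \<le> mrca n c r s"
    and "mrca n c r s \<le> n"
    and "\<And>k. k \<in> {1..<n} \<Longrightarrow> (anc n c k r = anc n c k s) \<longleftrightarrow> k < mrca n c r s"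
proof -
  define D where "D = {k \<in> {1..<n}. anc n c (k - 1) r = anc n c (k - 1) s}"
  have fin: "finite D" unfolding D_def by auto
  have "anc n c 0 r < 1" "anc n c 0 s < 1" using anc_bound_n[OF c] rs by fastforce+
  then have "1 \<in> D" unfolding D_def using rs by auto
  then have ne: "D \<noteq> {}" by auto
  have mD: "mrca n c r s \<in> D" unfolding mrca_def D_def[symmetric] using Max_in[OF fin ne] .
  have le: "k \<le> mrca n c r s" if "k \<in> D" for k unfolding mrca_def D_def[symmetric] using Max_ge[OF fin that] .
  have mn: "mrca n c r s < n" using mD unfolding D_def by auto
  show "mrca n c r s \<le> n" using mn by simp
  show eqv: "(anc n c (j - 1) r = anc n c (j - 1) s) \<longleftrightarrow> j \<le> mrca n c r s" if j: "j \<in> {1..n}" for j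
  proof
    assume eq: "anc n c (j - 1) r = anc n c (j - 1) s"
    show "j \<le> mrca n c r s"
    proof (cases "j = n")
      case True
      then obtain m where "n = Suc m" "j - 1 = m" using j by (cases n) auto
      then have "anc n c (j - 1) r = r" "anc n c (j - 1) s = s" by (simp_all add: anc_top)
      then show ?thesis using eq rs by simp
    next
      case False then have "j \<in> D" using j eq unfolding D_def by auto
      then show ?thesis using le by simp
    qed
  next
    assume "j \<le> mrca n c r s"
    moreover have "anc n c (mrca n c r s - 1) r = anc n c (mrca n c r s - 1) s" using mD unfolding D_def by auto
    ultimately show "anc n c (j - 1) r = anc n c (j - 1) s"
      using anc_mono[of "j - 1" "mrca n c r s - 1" n c r s] mn by auto
  qed
  show "(anc n c k r = anc n c k s) \<longleftrightarrow> k < mrca n c r s" if k: "k \<in> {1..<n}" for k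
    using eqv[of "Suc k"] k by auto
qed

definition iO :: "nat \<Rightarrow> (nat \<Rightarrow> nat) \<Rightarrow> nat \<Rightarrow> nat \<Rightarrow> innov" where
  "iO n c r j = OUi j (anc n c (j - 1) r)"
definition iJ :: "nat \<Rightarrow> (nat \<Rightarrow> nat) \<Rightarrow> nat \<Rightarrow> nat \<Rightarrow> innov" where
  "iJ n c r j = JUi j (anc n c j r)"
definition JS :: "nat \<Rightarrow> (nat \<Rightarrow> nat) \<Rightarrow> (nat \<Rightarrow> nat \<Rightarrow> bool) \<Rightarrow> nat \<Rightarrow> nat set" where
  "JS n c jmp r = {j \<in> {1..<n}. (anc n c j r = c j \<or> anc n c j r = j) \<and> jmp j (anc n c j r)}"
definition eO :: "real \<Rightarrow> real \<Rightarrow> (nat \<Rightarrow> real) \<Rightarrow> nat \<Rightarrow> nat \<Rightarrow> real" where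
  "eO \<alpha> \<sigma>a T n j = exp (- \<alpha> * tail n T j) * sqv \<alpha> \<sigma>a T j"
definition eJ :: "real \<Rightarrow> (nat \<Rightarrow> real) \<Rightarrow> (nat \<Rightarrow> real) \<Rightarrow> nat \<Rightarrow> nat \<Rightarrow> real" where
  "eJ \<alpha> T sc n j = exp (- \<alpha> * tail n T j) * sc j"
definition coef where
  "coef \<alpha> \<sigma>a T c sc jmp n r i =
     (\<Sum>j\<in>{1..n}. if i = iO n c r j then eO \<alpha> \<sigma>a T n j else 0)
   + (\<Sum>j\<in>JS n c jmp r. if i = iJ n c r j then eJ \<alpha> T sc n j else 0)"

lemma finite_innov_set: "finite (innov_set n c)"
proof (rule finite_subset)
  show "innov_set n c \<subseteq> (\<lambda>(k,l). OUi k l) ` ({..n} \<times> {..n}) \<union> (\<lambda>k. JUi k (c k)) ` {..n} \<union> (\<lambda>k. JUi k k) ` {..n}"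
    unfolding innov_set_def by (auto simp: image_iff)
qed auto

lemma finite_JS: "finite (JS n c jmp r)"
  unfolding JS_def by auto

lemma mem_iO:
  assumes c: "\<forall>k\<in>{1..<n}. c k < k" and r: "r < n" and j: "j \<in> {1..n}"
  shows "iO n c r j \<in> innov_set n c"
proof -
  have "anc n c (j - 1) r < Suc (j - 1)" using anc_bound_n[OF c _ r, of "j - 1"] j by auto
  then show ?thesis using j unfolding iO_def innov_set_def by auto
qed

lemma mem_iJ:
  assumes j: "j \<in> JS n c jmp r"
  shows "iJ n c r j \<in> innov_set n c"
  using j unfolding iJ_def innov_set_def JS_def by auto

lemma tip_coef:
  assumes n: "n \<ge> 1" and c: "\<forall>k\<in>{1..<n}. c k < k" and r: "r < n"
  shows "tipval \<alpha> \<theta> \<sigma>a X0 T c sc jmp n z r = \<theta> + (X0 - \<theta>) * exp (- \<alpha> * Utime n T)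
     + (\<Sum>i\<in>innov_set n c. coef \<alpha> \<sigma>a T c sc jmp n r i * z i)"
proof -
  have "(\<Sum>i\<in>innov_set n c. coef \<alpha> \<sigma>a T c sc jmp n r i * z i)
     = (\<Sum>i\<in>innov_set n c. (\<Sum>j\<in>{1..n}. if i = iO n c r j then eO \<alpha> \<sigma>a T n j else 0) * z i)
     + (\<Sum>i\<in>innov_set n c. (\<Sum>j\<in>JS n c jmp r. if i = iJ n c r j then eJ \<alpha> T sc n j else 0) * z i)"
    unfolding coef_def distrib_right sum.distrib ..
  also have "\<dots> = (\<Sum>j\<in>{1..n}. eO \<alpha> \<sigma>a T n j * z (iO n c r j)) + (\<Sum>j\<in>JS n c jmp r. eJ \<alpha> T sc n j * z (iJ n c r j))"
    using mem_iO[OF c r] mem_iJ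
    by (simp add: sum_delta_lin[OF finite_innov_set] finite_JS)
  finally show ?thesis
    unfolding tip_exp[OF n] by (simp add: eO_def eJ_def iO_def iJ_def JS_def)
qed

lemma coef_ip:
  assumes c: "\<forall>k\<in>{1..<n}. c k < k" and r: "r < n" and s: "s < n"
  shows "(\<Sum>i\<in>innov_set n c. coef \<alpha> \<sigma>a T c sc jmp n r i * coef \<alpha> \<sigma>a T c sc jmp n s i)
    = (\<Sum>j\<in>{1..n}. if anc n c (j - 1) r = anc n c (j - 1) s then (eO \<alpha> \<sigma>a T n j)\<^sup>2 else 0)
    + (\<Sum>j\<in>JS n c jmp r. if j \<in> JS n c jmp s \<and> anc n c j r = anc n c j s then (eJ \<alpha> T sc n j)\<^sup>2 else 0)"
proof -
  let ?S = "innov_set n c"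
  let ?O = "\<lambda>r i. (\<Sum>j\<in>{1..n}. if i = iO n c r j then eO \<alpha> \<sigma>a T n j else 0)"
  let ?J = "\<lambda>r i. (\<Sum>j\<in>JS n c jmp r. if i = iJ n c r j then eJ \<alpha> T sc n j else 0)"
  have split: "(\<Sum>i\<in>?S. coef \<alpha> \<sigma>a T c sc jmp n r i * coef \<alpha> \<sigma>a T c sc jmp n s i)
     = (\<Sum>i\<in>?S. ?O r i * ?O s i) + (\<Sum>i\<in>?S. ?O r i * ?J s i) + (\<Sum>i\<in>?S. ?J r i * ?O s i) + (\<Sum>i\<in>?S. ?J r i * ?J s i)"
    unfolding coef_def by (simp add: algebra_simps sum.distrib)
  note ip = sum_delta_ip[OF finite_innov_set]
  have mO: "\<forall>j\<in>{1..n}. iO n c x j \<in> ?S" if "x < n" for x using mem_iO[OF c that] by auto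
  have mJ: "\<forall>j\<in>JS n c jmp x. iJ n c x j \<in> ?S" for x using mem_iJ by auto
  have OO: "(\<Sum>i\<in>?S. ?O r i * ?O s i) = (\<Sum>j\<in>{1..n}. if anc n c (j - 1) r = anc n c (j - 1) s then (eO \<alpha> \<sigma>a T n j)\<^sup>2 else 0)"
  proof -
    have "(\<Sum>i\<in>?S. ?O r i * ?O s i) = (\<Sum>j\<in>{1..n}. \<Sum>k\<in>{1..n}. if iO n c r j = iO n c s k then eO \<alpha> \<sigma>a T n j * eO \<alpha> \<sigma>a T n k else 0)"
      by (rule ip) (use mO r s in auto)
    also have "\<dots> = (\<Sum>j\<in>{1..n}. \<Sum>k\<in>{1..n}. if j = k \<and> anc n c (j - 1) r = anc n c (k - 1) s then eO \<alpha> \<sigma>a T n j * eO \<alpha> \<sigma>a T n k else 0)"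
      unfolding iO_def by simp
    also have "\<dots> = (\<Sum>j\<in>{1..n}. if anc n c (j - 1) r = anc n c (j - 1) s then (eO \<alpha> \<sigma>a T n j)\<^sup>2 else 0)"
      by (intro sum.cong refl, subst sum_delta_conj) (auto simp: power2_eq_square)
    finally show ?thesis .
  qed
  have OJ: "(\<Sum>i\<in>?S. ?O r i * ?J s i) = 0"
  proof -
    have "(\<Sum>i\<in>?S. ?O r i * ?J s i) = (\<Sum>j\<in>{1..n}. \<Sum>k\<in>JS n c jmp s. if iO n c r j = iJ n c s k then eO \<alpha> \<sigma>a T n j * eJ \<alpha> T sc n k else 0)"
      by (rule ip) (use mO mJ r s finite_JS in auto)
    then show ?thesis by (simp add: iO_def iJ_def)
  qed
  have JO: "(\<Sum>i\<in>?S. ?J r i * ?O s i) = 0"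
  proof -
    have "(\<Sum>i\<in>?S. ?J r i * ?O s i) = (\<Sum>j\<in>JS n c jmp r. \<Sum>k\<in>{1..n}. if iJ n c r j = iO n c s k then eJ \<alpha> T sc n j * eO \<alpha> \<sigma>a T n k else 0)"
      by (rule ip) (use mO mJ r s finite_JS in auto)
    then show ?thesis by (simp add: iO_def iJ_def)
  qed
  have JJ: "(\<Sum>i\<in>?S. ?J r i * ?J s i) = (\<Sum>j\<in>JS n c jmp r. if j \<in> JS n c jmp s \<and> anc n c j r = anc n c j s then (eJ \<alpha> T sc n j)\<^sup>2 else 0)"
  proof -
    have "(\<Sum>i\<in>?S. ?J r i * ?J s i) = (\<Sum>j\<in>JS n c jmp r. \<Sum>k\<in>JS n c jmp s. if iJ n c r j = iJ n c s k then eJ \<alpha> T sc n j * eJ \<alpha> T sc n k else 0)"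
      by (rule ip) (use mJ finite_JS in auto)
    also have "\<dots> = (\<Sum>j\<in>JS n c jmp r. \<Sum>k\<in>JS n c jmp s. if j = k \<and> anc n c j r = anc n c k s then eJ \<alpha> T sc n j * eJ \<alpha> T sc n k else 0)"
      unfolding iJ_def by simp
    also have "\<dots> = (\<Sum>j\<in>JS n c jmp r. if j \<in> JS n c jmp s \<and> anc n c j r = anc n c j s then (eJ \<alpha> T sc n j)\<^sup>2 else 0)"
      by (intro sum.cong refl, subst sum_delta_conj) (auto simp: power2_eq_square finite_JS)
    finally show ?thesis .
  qed
  show ?thesis unfolding split OO OJ JO JJ by simp
qed

lemma Utime_tail: "Utime n T = tail n T 0"
  by (simp add: Utime_def tail_def)

lemma eJ_sq: "(eJ \<alpha> T sc n j)\<^sup>2 = (sc j)\<^sup>2 * exp (- 2 * \<alpha> * tail n T j)"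
  unfolding eJ_def by (simp add: power_mult_distrib power2_eq_square exp_add[symmetric])

lemma eO_sum:
  assumes \<alpha>: "\<alpha> > 0" and T: "\<forall>k\<in>{1..n}. T k > 0" and m: "m \<le> n"
  shows "(\<Sum>j\<in>{1..m}. (eO \<alpha> \<sigma>a T n j)\<^sup>2) = \<sigma>a\<^sup>2 / (2 * \<alpha>) * (exp (- 2 * \<alpha> * tail n T m) - exp (- 2 * \<alpha> * Utime n T))"
  unfolding eO_def Utime_tail using telescope[OF \<alpha> T m] .

lemma JS_sum_eq:
  shows "(\<Sum>k\<in>{k \<in> {1..<n}. Q k \<and> anc n c (k - 1) r = c k}.
            (sc k)\<^sup>2 * (if jmp k (anc n c k r) then 1 else 0) * exp (- 2 * \<alpha> * tail n T k))
       = (\<Sum>j\<in>JS n c jmp r. if Q j then (eJ \<alpha> T sc n j)\<^sup>2 else 0)"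
proof -
  have "(\<Sum>k\<in>{k \<in> {1..<n}. Q k \<and> anc n c (k - 1) r = c k}.
            (sc k)\<^sup>2 * (if jmp k (anc n c k r) then 1 else 0) * exp (- 2 * \<alpha> * tail n T k))
      = (\<Sum>k\<in>{1..<n}. if Q k \<and> anc n c (k - 1) r = c k then
            (sc k)\<^sup>2 * (if jmp k (anc n c k r) then 1 else 0) * exp (- 2 * \<alpha> * tail n T k) else 0)"
    by (rule sum.inter_filter) simp
  also have "\<dots> = (\<Sum>k\<in>{1..<n}. if k \<in> JS n c jmp r then (if Q k then (eJ \<alpha> T sc n k)\<^sup>2 else 0) else 0)"
  proof (intro sum.cong refl)
    fix k assume k: "k \<in> {1..<n}"
    show "(if Q k \<and> anc n c (k - 1) r = c k then
            (sc k)\<^sup>2 * (if jmp k (anc n c k r) then 1 else 0) * exp (- 2 * \<alpha> * tail n T k) else 0)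
        = (if k \<in> JS n c jmp r then (if Q k then (eJ \<alpha> T sc n k)\<^sup>2 else 0) else 0)"
      using PJ_equiv[OF k, of c r] k unfolding eJ_sq JS_def by auto
  qed
  also have "\<dots> = (\<Sum>j\<in>JS n c jmp r. if Q j then (eJ \<alpha> T sc n j)\<^sup>2 else 0)"
    by (subst sum.inter_filter[symmetric]) (auto simp: JS_def intro!: sum.cong)
  finally show ?thesis .
qed

lemma G_diag:
  assumes \<alpha>: "\<alpha> > 0" and T: "\<forall>k\<in>{1..n}. T k > 0" and c: "\<forall>k\<in>{1..<n}. c k < k" and r: "r < n"
  shows "(\<Sum>i\<in>innov_set n c. coef \<alpha> \<sigma>a T c sc jmp n r i * coef \<alpha> \<sigma>a T c sc jmp n r i)
    = \<sigma>a\<^sup>2 / (2 * \<alpha>) * (1 - exp (- 2 * \<alpha> * Utime n T)) + lin_sum \<alpha> T c sc jmp n r"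
proof -
  have O: "(\<Sum>j\<in>{1..n}. (eO \<alpha> \<sigma>a T n j)\<^sup>2) = \<sigma>a\<^sup>2 / (2 * \<alpha>) * (1 - exp (- 2 * \<alpha> * Utime n T))"
  proof -
    have "(\<Sum>j\<in>{1..n}. (eO \<alpha> \<sigma>a T n j)\<^sup>2) = \<sigma>a\<^sup>2 / (2 * \<alpha>) * (exp (- 2 * \<alpha> * tail n T n) - exp (- 2 * \<alpha> * Utime n T))"
      by (rule eO_sum[OF \<alpha> T]) simp
    then show ?thesis by (simp add: tail_self)
  qed
  have L: "lin_sum \<alpha> T c sc jmp n r = (\<Sum>j\<in>JS n c jmp r. if True then (eJ \<alpha> T sc n j)\<^sup>2 else 0)"
  proof -
    have "lin_sum \<alpha> T c sc jmp n r = (\<Sum>k\<in>{k \<in> {1..<n}. anc n c (k - 1) r = c k}.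
            (sc k)\<^sup>2 * (if jmp k (anc n c k r) then 1 else 0) * exp (- 2 * \<alpha> * tail n T k))"
      unfolding lin_sum_def lin_nodes_def Let_def
      by (rule sum_sorted_nth[where g = "\<lambda>k. (sc k)\<^sup>2 * (if jmp k (anc n c k r) then 1 else 0) * exp (- 2 * \<alpha> * tail n T k)"]) simp
    also have "\<dots> = (\<Sum>k\<in>{k \<in> {1..<n}. True \<and> anc n c (k - 1) r = c k}.
            (sc k)\<^sup>2 * (if jmp k (anc n c k r) then 1 else 0) * exp (- 2 * \<alpha> * tail n T k))" by simp
    also have "\<dots> = (\<Sum>j\<in>JS n c jmp r. if True then (eJ \<alpha> T sc n j)\<^sup>2 else 0)"
      by (rule JS_sum_eq)
    finally show ?thesis .
  qed
  show ?thesis using coef_ip[OF c r r, of \<alpha> \<sigma>a T sc jmp] O L by simp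
qed

lemma G_pair:
  assumes \<alpha>: "\<alpha> > 0" and T: "\<forall>k\<in>{1..n}. T k > 0" and c: "\<forall>k\<in>{1..<n}. c k < k" and rs: "r < s" "s < n"
  shows "(\<Sum>i\<in>innov_set n c. coef \<alpha> \<sigma>a T c sc jmp n r i * coef \<alpha> \<sigma>a T c sc jmp n s i)
    = \<sigma>a\<^sup>2 / (2 * \<alpha>) * (exp (- 2 * \<alpha> * tail n T (mrca n c r s)) - exp (- 2 * \<alpha> * Utime n T))
      + pair_sum \<alpha> T c sc jmp n r s"
proof -
  note mp = mrca_props[OF c rs]
  let ?m = "mrca n c r s"
  have O: "(\<Sum>j\<in>{1..n}. if anc n c (j - 1) r = anc n c (j - 1) s then (eO \<alpha> \<sigma>a T n j)\<^sup>2 else 0)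
      = \<sigma>a\<^sup>2 / (2 * \<alpha>) * (exp (- 2 * \<alpha> * tail n T ?m) - exp (- 2 * \<alpha> * Utime n T))"
  proof -
    have "(\<Sum>j\<in>{1..n}. if anc n c (j - 1) r = anc n c (j - 1) s then (eO \<alpha> \<sigma>a T n j)\<^sup>2 else 0)
        = (\<Sum>j\<in>{1..n}. if j \<le> ?m then (eO \<alpha> \<sigma>a T n j)\<^sup>2 else 0)"
      using mp(1) by (intro sum.cong) auto
    also have "\<dots> = (\<Sum>j\<in>{j\<in>{1..n}. j \<le> ?m}. (eO \<alpha> \<sigma>a T n j)\<^sup>2)"
      by (rule sum.inter_filter[symmetric]) simp
    also have "{j\<in>{1..n}. j \<le> ?m} = {1..?m}" using mp(2) by auto
    finally show ?thesis using eO_sum[OF \<alpha> T mp(2)] by simp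
  qed
  have J: "(\<Sum>j\<in>JS n c jmp r. if j \<in> JS n c jmp s \<and> anc n c j r = anc n c j s then (eJ \<alpha> T sc n j)\<^sup>2 else 0)
       = pair_sum \<alpha> T c sc jmp n r s"
  proof -
    have "(\<Sum>j\<in>JS n c jmp r. if j \<in> JS n c jmp s \<and> anc n c j r = anc n c j s then (eJ \<alpha> T sc n j)\<^sup>2 else 0)
       = (\<Sum>j\<in>JS n c jmp r. if j < ?m then (eJ \<alpha> T sc n j)\<^sup>2 else 0)"
    proof (intro sum.cong refl)
      fix j assume j: "j \<in> JS n c jmp r"
      then have j': "j \<in> {1..<n}" unfolding JS_def by auto
      show "(if j \<in> JS n c jmp s \<and> anc n c j r = anc n c j s then (eJ \<alpha> T sc n j)\<^sup>2 else 0)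
          = (if j < ?m then (eJ \<alpha> T sc n j)\<^sup>2 else 0)"
        using mp(3)[OF j'] j unfolding JS_def by auto
    qed
    moreover have "pair_sum \<alpha> T c sc jmp n r s = (\<Sum>k\<in>{k \<in> {1..<n}. k < ?m \<and> anc n c (k - 1) r = c k}.
            (sc k)\<^sup>2 * (if jmp k (anc n c k r) then 1 else 0) * exp (- 2 * \<alpha> * tail n T k))"
      unfolding pair_sum_def pair_nodes_def Let_def
      by (rule sum_sorted_nth[where g = "\<lambda>k. (sc k)\<^sup>2 * (if jmp k (anc n c k r) then 1 else 0) * exp (- 2 * \<alpha> * tail n T k)"]) simp
    moreover have "(\<Sum>k\<in>{k \<in> {1..<n}. k < ?m \<and> anc n c (k - 1) r = c k}.
            (sc k)\<^sup>2 * (if jmp k (anc n c k r) then 1 else 0) * exp (- 2 * \<alpha> * tail n T k))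
        = (\<Sum>j\<in>JS n c jmp r. if j < ?m then (eJ \<alpha> T sc n j)\<^sup>2 else 0)"
      by (rule JS_sum_eq)
    ultimately show ?thesis by simp
  qed
  have rn: "r < n" using rs by simp
  show ?thesis unfolding coef_ip[OF c rn rs(2)] O J ..
qed

lemma double_sum_sym:
  fixes G :: "nat \<Rightarrow> nat \<Rightarrow> real"
  assumes sym: "\<And>r s. G r s = G s r"
  shows "(\<Sum>r<n. \<Sum>s<n. G r s) = (\<Sum>r<n. G r r) + 2 * (\<Sum>r<n. \<Sum>s\<in>{r<..<n}. G r s)"
proof (induction n)
  case 0 then show ?case by simp
next
  case (Suc n)
  have ins: "{r<..<Suc n} = insert n {r<..<n}" if "r < n" for r using that by auto
  have e0: "{n<..<Suc n} = {}" by auto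
  have A: "(\<Sum>r<Suc n. \<Sum>s\<in>{r<..<Suc n}. G r s) = (\<Sum>r<n. \<Sum>s\<in>{r<..<n}. G r s) + (\<Sum>r<n. G r n)"
  proof -
    have "(\<Sum>r<Suc n. \<Sum>s\<in>{r<..<Suc n}. G r s) = (\<Sum>r<n. \<Sum>s\<in>{r<..<Suc n}. G r s)"
      by (simp add: e0)
    also have "\<dots> = (\<Sum>r<n. (\<Sum>s\<in>{r<..<n}. G r s) + G r n)"
      by (intro sum.cong refl) (simp add: ins)
    finally show ?thesis by (simp add: sum.distrib)
  qed
  have B: "(\<Sum>r<Suc n. \<Sum>s<Suc n. G r s) = (\<Sum>r<n. \<Sum>s<n. G r s) + (\<Sum>r<n. G r n) + (\<Sum>s<n. G n s) + G n n"
    by (simp add: sum.distrib)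
  have C: "(\<Sum>s<n. G n s) = (\<Sum>r<n. G r n)" using sym by simp
  have e: "{n<..<Suc n} = {}" by auto
  show ?case unfolding A B C Suc.IH by (simp add: e)
qed

lemma count_pairs: "(\<Sum>r<n. \<Sum>s\<in>{r<..<n}. (1::real)) = real (n choose 2)"
proof (induction n)
  case 0 then show ?case by simp
next
  case (Suc n)
  have ins: "{r<..<Suc n} = insert n {r<..<n}" if "r < n" for r using that by auto
  have "(\<Sum>r<Suc n. \<Sum>s\<in>{r<..<Suc n}. (1::real)) = (\<Sum>r<n. \<Sum>s\<in>{r<..<Suc n}. (1::real))" by simp
  also have "\<dots> = (\<Sum>r<n. (\<Sum>s\<in>{r<..<n}. (1::real)) + 1)"
    by (intro sum.cong refl) (simp add: ins)
  also have "\<dots> = real (n choose 2) + real n" unfolding sum.distrib Suc.IH by simp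
  also have "\<dots> = real (Suc n choose 2)"
    using binomial_Suc_Suc[of n 1] by (simp add: numeral_2_eq_2)
  finally show ?case .
qed

lemma choose2_real: "2 * real (n choose 2) = real n * (real n - 1)"
proof (induction n)
  case 0 then show ?case by simp
next
  case (Suc n)
  have "real (Suc n choose 2) = real (n choose 2) + real n"
    using binomial_Suc_Suc[of n 1] by (simp add: numeral_2_eq_2)
  then show ?case using Suc.IH by (simp add: algebra_simps)
qed

lemma avg_pair_mult:
  "real (n choose 2) * avg_pair n f = (\<Sum>r<n. \<Sum>s\<in>{r<..<n}. f r s)"
proof (cases "n choose 2 = 0")
  case True
  then have "n < 2" by (simp add: binomial_eq_0_iff)
  then have "n = 0 \<or> n = 1" by auto
  moreover have "{0<..<Suc 0} = ({}::nat set)" by auto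
  ultimately show ?thesis using True by auto
next
  case False then show ?thesis unfolding avg_pair_def by simp
qed

theorem lemma7:
  fixes M :: "'a measure" and Z :: "innov \<Rightarrow> 'a \<Rightarrow> real"
    and n :: nat and \<alpha> \<sigma>a \<theta> X0 :: real
    and T :: "nat \<Rightarrow> real" and c :: "nat \<Rightarrow> nat"
    and sc :: "nat \<Rightarrow> real" and jmp :: "nat \<Rightarrow> nat \<Rightarrow> bool"
  assumes M: "prob_space M"
    and n: "n \<ge> 1" and \<alpha>: "\<alpha> > 0" and \<sigma>a: "\<sigma>a > 0"
    and T: "\<forall>k\<in>{1..n}. T k > 0"
    and c: "\<forall>k\<in>{1..<n}. c k < k"
    and indep: "prob_space.indep_vars M (\<lambda>_. borel) Z (innov_set n c)"
    and normal: "\<forall>i\<in>innov_set n c. distributed M lborel (Z i) std_normal_density"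
  defines "Yb \<equiv> (\<lambda>\<omega>. Ybar \<alpha> \<theta> \<sigma>a X0 T c sc jmp n (\<lambda>i. Z i \<omega>))"
    and "\<delta> \<equiv> (X0 - \<theta>) / sqrt (\<sigma>a\<^sup>2 / (2 * \<alpha>))"
    and "U \<equiv> Utime n T"
    and "Etau \<equiv> avg_pair n (\<lambda>r s. exp (- 2 * \<alpha> * tail n T (mrca n c r s)))"
    and "Elin \<equiv> avg_tip n (\<lambda>r. lin_sum \<alpha> T c sc jmp n r)"
    and "Epair \<equiv> avg_pair n (\<lambda>r s. pair_sum \<alpha> T c sc jmp n r s)"
  shows "(\<integral>\<omega>. Yb \<omega> \<partial>M) = \<delta> * exp (- \<alpha> * U)
    \<and> (\<integral>\<omega>. (Yb \<omega>)\<^sup>2 \<partial>M) =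
           1 / real n - (1 - \<delta>\<^sup>2) * exp (- 2 * \<alpha> * U) + (1 - 1 / real n) * Etau
           + (1 / real n) * inverse (\<sigma>a\<^sup>2 / (2 * \<alpha>)) * Elin
           + (1 - 1 / real n) * inverse (\<sigma>a\<^sup>2 / (2 * \<alpha>)) * Epair
    \<and> (\<integral>\<omega>. (Yb \<omega> - (\<integral>\<omega>'. Yb \<omega>' \<partial>M))\<^sup>2 \<partial>M) =
           1 / real n - exp (- 2 * \<alpha> * U) + (1 - 1 / real n) * Etau
           + (1 / real n) * inverse (\<sigma>a\<^sup>2 / (2 * \<alpha>)) * Elin
           + (1 - 1 / real n) * inverse (\<sigma>a\<^sup>2 / (2 * \<alpha>)) * Epair"
proof -
  let ?S = "innov_set n c"
  define K where "K = \<sigma>a\<^sup>2 / (2 * \<alpha>)"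
  define sd where "sd = sqrt K"
  define cf where "cf = coef \<alpha> \<sigma>a T c sc jmp n"
  define B where "B i = (\<Sum>r<n. cf r i) / (real n * sd)" for i
  define \<mu> where "\<mu> = \<delta> * exp (- \<alpha> * U)"
  define G where "G r s = (\<Sum>i\<in>?S. cf r i * cf s i)" for r s
  define E where "E = exp (- 2 * \<alpha> * U)"
  define C where "C = real (n choose 2)"
  define N where "N = real n"
  have Kp: "K > 0" unfolding K_def using \<alpha> \<sigma>a by simp
  have sdp: "sd > 0" unfolding sd_def using Kp by simp
  have sd2: "sd\<^sup>2 = K" unfolding sd_def using Kp by simp
  have Np: "N > 0" unfolding N_def using n by simp
  have c': "\<forall>k\<in>{1..<n}. c k < k" using c by auto
  have \<delta>: "\<delta> = (X0 - \<theta>) / sd" unfolding \<delta>_def sd_def K_def ..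
  have rep: "Yb \<omega> = \<mu> + (\<Sum>i\<in>?S. B i * Z i \<omega>)" for \<omega>
  proof -
    have "Yb \<omega> = (1 / N) * (\<Sum>r<n. ((X0 - \<theta>) * exp (- \<alpha> * U) + (\<Sum>i\<in>?S. cf r i * Z i \<omega>)) / sd)"
      unfolding Yb_def Ybar_def N_def sd_def K_def
      by (intro arg_cong2[where f = "(*)"] refl sum.cong) (simp_all add: tip_coef[OF n c'] cf_def U_def)
    also have "\<dots> = (1 / N) * ((N * ((X0 - \<theta>) * exp (- \<alpha> * U)) + (\<Sum>i\<in>?S. (\<Sum>r<n. cf r i) * Z i \<omega>)) / sd)"
    proof -
      have "(\<Sum>r<n. (\<Sum>i\<in>?S. cf r i * Z i \<omega>)) = (\<Sum>i\<in>?S. (\<Sum>r<n. cf r i) * Z i \<omega>)"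
        by (simp add: sum_distrib_right sum.swap[of _ "{..<n}"])
      then show ?thesis unfolding N_def by (simp add: sum_divide_distrib[symmetric] sum.distrib)
    qed
    also have "\<dots> = \<mu> + (1 / N) * ((\<Sum>i\<in>?S. (\<Sum>r<n. cf r i) * Z i \<omega>) / sd)"
      unfolding \<mu>_def \<delta> using Np sdp by (simp add: field_simps)
    also have "(1 / N) * ((\<Sum>i\<in>?S. (\<Sum>r<n. cf r i) * Z i \<omega>) / sd) = (\<Sum>i\<in>?S. B i * Z i \<omega>)"
    proof -
      have "(1 / N) * ((\<Sum>i\<in>?S. (\<Sum>r<n. cf r i) * Z i \<omega>) / sd) = (\<Sum>i\<in>?S. (\<Sum>r<n. cf r i) * Z i \<omega>) / (N * sd)"
        by simp
      also have "\<dots> = (\<Sum>i\<in>?S. (\<Sum>r<n. cf r i) * Z i \<omega> / (N * sd))"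
        by (rule sum_divide_distrib)
      also have "\<dots> = (\<Sum>i\<in>?S. B i * Z i \<omega>)"
        unfolding B_def N_def by (intro sum.cong refl) simp
      finally show ?thesis .
    qed
    finally show ?thesis .
  qed
  note lm = lin_moments[OF M finite_innov_set indep normal rep]
  have rep2: "Yb \<omega> - \<mu> = 0 + (\<Sum>i\<in>?S. B i * Z i \<omega>)" for \<omega> using rep by simp
  note lm2 = lin_moments[OF M finite_innov_set indep normal rep2]
  have BG: "(\<Sum>i\<in>?S. (B i)\<^sup>2) = (\<Sum>r<n. \<Sum>s<n. G r s) / (N\<^sup>2 * K)"
  proof -
    have "(\<Sum>i\<in>?S. (B i)\<^sup>2) = (\<Sum>i\<in>?S. \<Sum>r<n. \<Sum>s<n. cf r i * cf s i) / (N\<^sup>2 * K)"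
      unfolding B_def N_def sd2[symmetric]
      by (simp add: power_divide sum_divide_distrib power2_eq_square sum_product mult_ac)
    also have "(\<Sum>i\<in>?S. \<Sum>r<n. \<Sum>s<n. cf r i * cf s i) = (\<Sum>r<n. \<Sum>s<n. G r s)"
      unfolding G_def by (subst sum.swap) (simp add: sum.swap[of _ ?S])
    finally show ?thesis .
  qed
  have Gsym: "G r s = G s r" for r s unfolding G_def by (simp add: mult.commute)
  have Gd: "(\<Sum>r<n. G r r) = N * K * (1 - E) + N * Elin"
  proof -
    have "(\<Sum>r<n. G r r) = (\<Sum>r<n. K * (1 - E) + lin_sum \<alpha> T c sc jmp n r)"
      unfolding G_def cf_def K_def E_def U_def
      by (intro sum.cong refl) (simp add: G_diag[OF \<alpha> T c'])
    also have "\<dots> = N * K * (1 - E) + N * Elin"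
      unfolding Elin_def avg_tip_def N_def using Np[unfolded N_def] by (simp add: sum.distrib)
    finally show ?thesis .
  qed
  have Gp: "(\<Sum>r<n. \<Sum>s\<in>{r<..<n}. G r s) = K * (C * Etau) - K * E * C + C * Epair"
  proof -
    have "(\<Sum>r<n. \<Sum>s\<in>{r<..<n}. G r s) = (\<Sum>r<n. \<Sum>s\<in>{r<..<n}.
        K * exp (- 2 * \<alpha> * tail n T (mrca n c r s)) - K * E * 1 + pair_sum \<alpha> T c sc jmp n r s)"
      unfolding G_def cf_def K_def E_def U_def
      by (intro sum.cong refl) (simp add: G_pair[OF \<alpha> T c'] algebra_simps)
    also have "\<dots> = K * (\<Sum>r<n. \<Sum>s\<in>{r<..<n}. exp (- 2 * \<alpha> * tail n T (mrca n c r s)))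
        - K * E * (\<Sum>r<n. \<Sum>s\<in>{r<..<n}. 1) + (\<Sum>r<n. \<Sum>s\<in>{r<..<n}. pair_sum \<alpha> T c sc jmp n r s)"
      by (simp only: sum.distrib sum_subtractf sum_distrib_left)
    also have "\<dots> = K * (C * Etau) - K * E * C + C * Epair"
      unfolding count_pairs C_def Etau_def Epair_def avg_pair_mult ..
    finally show ?thesis .
  qed
  have C2: "2 * C = N * (N - 1)" unfolding C_def N_def by (rule choose2_real)
  have var: "(\<Sum>i\<in>?S. (B i)\<^sup>2) = 1 / N - E + (1 - 1 / N) * Etau + (1 / N) * inverse K * Elin
      + (1 - 1 / N) * inverse K * Epair"
  proof -
    have "(\<Sum>i\<in>?S. (B i)\<^sup>2) = (N * K * (1 - E) + N * Elin + 2 * (K * (C * Etau) - K * E * C + C * Epair)) / (N\<^sup>2 * K)"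
      unfolding BG double_sum_sym[of G, OF Gsym] Gd Gp ..
    also have "\<dots> = (N * K * (1 - E) + N * Elin + (2 * C) * (K * Etau - K * E + Epair)) / (N\<^sup>2 * K)"
      by (simp add: algebra_simps)
    also have "\<dots> = 1 / N - E + (1 - 1 / N) * Etau + (1 / N) * inverse K * Elin + (1 - 1 / N) * inverse K * Epair"
      unfolding C2 using Np Kp by (simp add: field_simps power2_eq_square)
    finally show ?thesis .
  qed
  have mu2: "\<mu>\<^sup>2 = \<delta>\<^sup>2 * E"
    unfolding \<mu>_def E_def by (simp add: power_mult_distrib power2_eq_square exp_add[symmetric])
  show ?thesis
  proof (intro conjI)
    show "(\<integral>\<omega>. Yb \<omega> \<partial>M) = \<delta> * exp (- \<alpha> * U)" using lm(1) unfolding \<mu>_def .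
    show "(\<integral>\<omega>. (Yb \<omega>)\<^sup>2 \<partial>M) = 1 / real n - (1 - \<delta>\<^sup>2) * exp (- 2 * \<alpha> * U) + (1 - 1 / real n) * Etau
           + (1 / real n) * inverse (\<sigma>a\<^sup>2 / (2 * \<alpha>)) * Elin
           + (1 - 1 / real n) * inverse (\<sigma>a\<^sup>2 / (2 * \<alpha>)) * Epair"
      using lm(2) var mu2 unfolding N_def[symmetric] K_def[symmetric] E_def[symmetric] by (simp add: algebra_simps)
    show "(\<integral>\<omega>. (Yb \<omega> - (\<integral>\<omega>'. Yb \<omega>' \<partial>M))\<^sup>2 \<partial>M) = 1 / real n - exp (- 2 * \<alpha> * U) + (1 - 1 / real n) * Etau
           + (1 / real n) * inverse (\<sigma>a\<^sup>2 / (2 * \<alpha>)) * Elin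
           + (1 - 1 / real n) * inverse (\<sigma>a\<^sup>2 / (2 * \<alpha>)) * Epair"
      using lm2(2) var unfolding lm(1) N_def[symmetric] K_def[symmetric] E_def[symmetric] by simp
  qed
qed

end
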